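(* Let $d$ be an integer and $x$ a real number with $0<d\leqslant x/2$. For every integer $k$ with $K_d-d<k\leqslant K_d$, $$d^2\lfloor x/k\rfloor+\frac{2dx}{\lfloor x/k\rfloor}-x^2F(x/k)=2d\sqrt{dx}+kd-\frac{k^3}{3x}+O(d^{5/2}x^{-1/2}),$$ with an absolute implied constant.
   Context: $\lfloor\cdot\rfloor$ denotes the integer part. For an integer $d\geqslant 0$ and real $x>0$, $K_d=K_d(x)=\big\lfloor \big(d+\sqrt{d^2+4dx}\,\big)/2\big\rfloor$. For real $t$, $F(t)=\sum_{n>t-1}\frac{1}{n^2(n+1)^2}$, summed over positive integers $n>t-1$. *)

theory Defs
  imports "HOL-Analysis.Analysis"
begin

definition Kd :: "int \<Rightarrow> real \<Rightarrow> int" where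
  "Kd d x = \<lfloor>(real_of_int d + sqrt ((real_of_int d)\<^sup>2 + 4 * real_of_int d * x)) / 2\<rfloor>"

definition F :: "real \<Rightarrow> real" where
  "F t = (\<Sum>\<^sub>\<infinity> n \<in> {n::nat. 0 < n \<and> real n > t - 1}. 1 / ((real n)\<^sup>2 * (real n + 1)\<^sup>2))"

end

theory Submission
  imports Defs "HOL-Real_Asymp.Real_Asymp"
begin

lemma tele_id: "(n::real) > 0 \<Longrightarrow> 1 / (n\<^sup>2 * (n + 1)\<^sup>2) = (1/(3*n^3) - 1/(3*(n+1)^3)) - 1/(3*n^3*(n+1)^3)"
  apply (simp add: field_simps)
  apply algebra done

lemma F_tail:
  fixes m :: nat assumes m: "m \<ge> 1"
  shows "0 \<le> 1/(3*real m^3) - (\<Sum>\<^sub>\<infinity> n \<in> {m..}. 1 / ((real n)\<^sup>2 * (real n + 1)\<^sup>2))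
      \<and> 1/(3*real m^3) - (\<Sum>\<^sub>\<infinity> n \<in> {m..}. 1 / ((real n)\<^sup>2 * (real n + 1)\<^sup>2)) \<le> 1/(9*real m^5)"
proof -
  define f where "f = (\<lambda>n::nat. 1 / ((real n)\<^sup>2 * (real n + 1)\<^sup>2))"
  define h where "h = (\<lambda>n::nat. 1/(3*real n^3))"
  define a where "a = (\<lambda>i. h (i+m) - h (Suc (i+m)))"
  define b where "b = (\<lambda>i. 1/(3*(real (i+m))^3*(real (i+m)+1)^3))"
  have fab: "f (i+m) = a i - b i" for i
  proof -
    have p: "real (i+m) > 0" using m by simp
    show ?thesis unfolding f_def a_def b_def h_def using tele_id[OF p] by (simp add: add.commute)
  qed
  have hlim: "(\<lambda>i. h (i+m)) \<longlonglongrightarrow> 0"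
  proof -
    have "(\<lambda>i. h i) \<longlonglongrightarrow> 0" unfolding h_def
      by real_asymp
    then show ?thesis by (rule LIMSEQ_ignore_initial_segment)
  qed
  have asums: "a sums (h m)"
    using telescope_sums'[OF hlim] unfolding a_def by simp
  have b0: "0 \<le> b i" for i unfolding b_def by simp
  have f0: "0 \<le> f i" for i unfolding f_def by simp
  have bf: "b i \<le> f (i+m) / (3 * real m ^ 2)" for i
  proof -
    define n where "n = real (i+m)"
    have p: "n \<ge> real m" "real m \<ge> 1" using m by (auto simp: n_def)
    have q: "real m^2 \<le> n * (n + 1)"
      using p by (simp add: power2_eq_square mult_mono)
    have e1: "b i = (1 / (n\<^sup>2 * (n + 1)\<^sup>2)) / (3 * (n * (n+1)))"
      unfolding b_def n_def[symmetric] by (simp add: power2_eq_square power3_eq_cube)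
    have "(1 / (n\<^sup>2 * (n + 1)\<^sup>2)) / (3 * (n * (n+1))) \<le> (1 / (n\<^sup>2 * (n + 1)\<^sup>2)) / (3 * real m ^ 2)"
      apply (rule divide_left_mono) using q p by auto
    then show ?thesis unfolding e1 f_def n_def by simp
  qed
  have ba: "b i \<le> a i" for i using fab[of i] f0[of "i+m"] by simp
  have bsum: "summable b"
    by (rule summable_comparison_test'[of a 0]) (use asums b0 ba in \<open>auto simp: sums_iff\<close>)
  have fsums: "(\<lambda>i. f (i+m)) sums (h m - suminf b)"
    unfolding fab using sums_diff[OF asums summable_sums[OF bsum]] .
  have fhs: "((\<lambda>i. f (i+m)) has_sum (h m - suminf b)) UNIV"
    by (rule sums_nonneg_imp_has_sum[OF fsums]) (simp add: f0)
  have bij: "bij_betw (\<lambda>i. i+m) UNIV {m..}"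
    by (rule bij_betwI[where g="\<lambda>n. n - m"]) auto
  have S: "(\<Sum>\<^sub>\<infinity> n \<in> {m..}. f n) = h m - suminf b"
    using infsum_reindex_bij_betw[OF bij, of f] fhs by (simp add: infsumI)
  have sb0: "0 \<le> suminf b" using bsum b0 by (simp add: suminf_nonneg)
  have sbf: "suminf b \<le> (h m - suminf b) / (3 * real m ^ 2)"
  proof -
    have "suminf b \<le> (\<Sum>i. f (i+m) / (3 * real m ^ 2))"
      by (rule suminf_le) (use bf bsum fsums summable_divide in \<open>auto simp: sums_iff\<close>)
    also have "\<dots> = (h m - suminf b) / (3 * real m ^ 2)"
      using fsums by (simp add: sums_iff suminf_divide)
    finally show ?thesis .
  qed
  have sbh: "suminf b \<le> h m / (3 * real m ^ 2)"
  proof -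
    have "(h m - suminf b) / (3 * real m ^ 2) \<le> h m / (3 * real m ^ 2)"
      using sb0 by (simp add: divide_right_mono)
    then show ?thesis using sbf by linarith
  qed
  have "h m / (3 * real m ^ 2) = 1/(9*real m^5)" unfolding h_def by (simp add: field_simps)
  then show ?thesis using S sb0 sbh unfolding f_def h_def by simp
qed
lemma alg1:
  fixes d x m r :: real assumes "m \<noteq> 0" "r \<noteq> 0"
  shows "(d^2*m + 2*d*x/m - x^2/(3*m^3)) - (d^2*r + 2*d*x/r - x^2/(3*r^3))
     = (m - r) * ((d - x/(m*r))^2 + x^2*(r-m)^2/(3*m^3*r^3))"
  using assms apply (simp add: field_simps)
  apply algebra done

lemma alg2:
  fixes d x k s :: real assumes "k \<noteq> 0" "x \<noteq> 0" "s^2 = d*x"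
  shows "(d^2*(x/k) + 2*d*x/(x/k) - x^2/(3*(x/k)^3)) - (2*d* s + k*d - k^3/(3*x)) = d*(s-k)^2/k"
proof -
  have "d*(s-k)^2/k = d*(s^2 - 2* s*k + k^2)/k" by (simp add: power2_eq_square algebra_simps)
  also have "\<dots> = d*(d*x - 2* s*k + k^2)/k" using assms by simp
  finally have 1: "d*(s-k)^2/k = d*(d*x - 2* s*k + k^2)/k" .
  show ?thesis unfolding 1 using assms by (simp add: field_simps power3_eq_cube power2_eq_square)
qed
lemma pw: "(d::real) > 0 \<Longrightarrow> s > 0 \<Longrightarrow> (s^2/d)^2 * (4*d/s)^5/9 = (1024/9)*(d^3/s)"
proof -
  assume a: "(d::real) > 0" "s > 0"
  have "(4*d/s)^5 = 1024*d^5/s^5" by (simp add: power_divide power_mult_distrib)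
  moreover have "(s^2/d)^2 = s^4/d^2" by (simp add: power_divide power_mult_distrib flip: power_mult)
  ultimately have "(s^2/d)^2 * (4*d/s)^5/9 = (1024/9) * ((s^4 * d^5)/(d^2* s^5))" by simp
  also have "(s^4 * d^5)/(d^2* s^5) = d^3/s" using a
    by (simp add: field_simps power_add[symmetric] flip: power_add) (simp add: numeral_eq_Suc)
  finally show ?thesis .
qed

lemma mainlem:
  fixes d x k m e s :: real
  assumes d: "d > 0" and x: "2*d \<le> x" and s: "s = sqrt(d*x)" and k1: "s - d/2 < k" and k2: "k \<le> s + d"
   and m1: "m \<ge> 1" and m2: "x/k - 1 < m" and m3: "m \<le> x/k" and e0: "0 \<le> e" and e1: "e \<le> 1/(9*m^5)"
  shows "\<bar>d^2*m + 2*d*x/m - x^2*(1/(3*m^3) - e) - (2*d* s + k*d - k^3/(3*x))\<bar> \<le> 1000 * d^3/s"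
proof -
  have xpos: "x > 0" using d x by linarith
  have spos: "s > 0" using s d xpos by simp
  have ss: "s^2 = d*x" using s d xpos by simp
  have ds: "d \<le> s"
  proof -
    have "d^2 \<le> d*x" using d x by (simp add: power2_eq_square)
    then have "sqrt (d^2) \<le> s" unfolding s by (rule real_sqrt_le_mono)
    then show ?thesis using d by simp
  qed
  have D0: "0 \<le> d^3/s" using d spos by simp
  have klo: "k \<ge> s/2" using k1 ds by linarith
  have khi: "k \<le> 2* s" using k2 ds by linarith
  have kpos: "k > 0" using klo spos by linarith
  have ksd: "\<bar>s - k\<bar> \<le> d" using k1 k2 d by linarith
  define r where "r = x/k"
  have rpos: "r > 0" unfolding r_def using xpos kpos by simp
  have xs: "x = s^2/d" using ss d by simp
  have rlo: "r \<ge> s/(2*d)"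
  proof -
    have "x/(2* s) \<le> x/k" using xpos kpos khi by (intro divide_left_mono) auto
    moreover have "x/(2* s) = s/(2*d)" using xs spos d by (simp add: field_simps power2_eq_square)
    ultimately show ?thesis unfolding r_def by simp
  qed
  have rhi: "r \<le> 2* s/d"
  proof -
    have "x/k \<le> x/(s/2)" using xpos kpos klo spos by (intro divide_left_mono) auto
    moreover have "x/(s/2) = 2* s/d" using xs spos d by (simp add: field_simps power2_eq_square)
    ultimately show ?thesis unfolding r_def by simp
  qed
  have mlo0: "m \<ge> r/2" using m1 m2 unfolding r_def[symmetric] by linarith
  have mlo: "m \<ge> s/(4*d)" using mlo0 rlo by (simp add: field_simps)
  have mpos: "m > 0" using m1 by simp
  have mr_lo: "m*r \<ge> s^2/(8*d^2)"
  proof -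
    have "(s/(4*d))*(s/(2*d)) \<le> m*r" using mlo rlo spos d mpos by (intro mult_mono) auto
    then show ?thesis by (simp add: field_simps power2_eq_square)
  qed
  have xmr: "x/(m*r) \<le> 8*d"
  proof -
    have "x/(m*r) \<le> x/(s^2/(8*d^2))" using mr_lo xpos spos d mpos rpos by (intro divide_left_mono) auto
    also have "\<dots> = 8*d" using xs d spos by (simp add: field_simps power2_eq_square)
    finally show ?thesis .
  qed
  have imr: "1/(m*r) \<le> 8*d^2/s^2"
  proof -
    have "1/(m*r) \<le> 1/(s^2/(8*d^2))" using mr_lo spos d mpos rpos by (intro divide_left_mono) auto
    then show ?thesis by simp
  qed
  have xmr0: "x/(m*r) \<ge> 0" using xpos mpos rpos by simp
  have T1: "d*(s-k)^2/k \<le> 2*(d^3/s)"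
  proof -
    have "(s-k)^2 \<le> d^2" using ksd by (metis abs_le_square_iff abs_of_pos d)
    then have "d*(s-k)^2/k \<le> d*d^2/k" using d kpos by (simp add: divide_right_mono)
    also have "\<dots> \<le> d*d^2/(s/2)" using d kpos klo spos by (intro divide_left_mono) auto
    also have "\<dots> = 2*(d^3/s)" by (simp add: field_simps power2_eq_square power3_eq_cube)
    finally show ?thesis .
  qed
  have T10: "d*(s-k)^2/k \<ge> 0" using d kpos by simp
  define B where "B = (d - x/(m*r))^2 + x^2*(r-m)^2/(3*m^3*r^3)"
  have B0: "B \<ge> 0" unfolding B_def using mpos rpos by simp
  have rm: "0 \<le> r - m" "r - m \<le> 1" using m2 m3 unfolding r_def[symmetric] by auto
  have Bb2: "x^2*(r-m)^2/(3*m^3*r^3) \<le> 171*(d^3/s)"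
  proof -
    have "(r-m)^2 \<le> 1" using rm by (simp add: power_le_one)
    then have "x^2*(r-m)^2/(3*m^3*r^3) \<le> x^2*1/(3*m^3*r^3)"
      using mpos rpos by (intro divide_right_mono mult_left_mono) auto
    also have "\<dots> = (x/(m*r))^2 * (1/(m*r)) / 3" by (simp add: field_simps power2_eq_square power3_eq_cube)
    also have "\<dots> \<le> (8*d)^2 * (8*d^2/s^2) / 3"
      using xmr xmr0 imr mpos rpos by (intro divide_right_mono mult_mono power_mono) auto
    also have "\<dots> = (512/3) * (d^3/s) * (d/s)" using spos by (simp add: field_simps power2_eq_square power3_eq_cube)
    also have "\<dots> \<le> (512/3) * (d^3/s) * 1" using ds d spos by (intro mult_left_mono) auto
    also have "\<dots> \<le> 171*(d^3/s)" using D0 by linarith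
    finally show ?thesis .
  qed
  have Dd: "\<bar>d - x/(m*r)\<bar> \<le> 19*d^2/s"
  proof -
    have a: "x/(r*r) = d*k^2/s^2" unfolding r_def using xpos kpos ss d by (simp add: field_simps power2_eq_square)
    have "s^2 - k^2 = (s-k)*(s+k)" by (simp add: power2_eq_square algebra_simps)
    then have "\<bar>s^2 - k^2\<bar> = \<bar>s-k\<bar>*(s+k)" using spos kpos by (simp add: abs_mult)
    also have "\<dots> \<le> d*(3* s)" using ksd khi spos kpos d by (intro mult_mono) auto
    finally have sk: "\<bar>s^2 - k^2\<bar> \<le> 3*d* s" by simp
    have b: "d - x/(r*r) = d*(s^2-k^2)/s^2" unfolding a using spos by (simp add: field_simps)
    have c: "\<bar>d - x/(r*r)\<bar> \<le> 3*d^2/s"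
    proof -
      have "\<bar>d - x/(r*r)\<bar> = d*\<bar>s^2-k^2\<bar>/s^2" unfolding b using d spos by (simp add: abs_mult)
      also have "\<dots> \<le> d*(3*d* s)/s^2" using sk d spos by (intro divide_right_mono mult_left_mono) auto
      also have "\<dots> = 3*d^2/s" using spos by (simp add: field_simps power2_eq_square)
      finally show ?thesis .
    qed
    have e: "x/(m*r) - x/(r*r) = (x/(m*r)) * ((r-m)/r)" using mpos rpos by (simp add: field_simps)
    have f: "0 \<le> (x/(m*r)) * ((r-m)/r)" using xmr0 rm rpos by (intro mult_nonneg_nonneg) auto
    have g: "(x/(m*r)) * ((r-m)/r) \<le> (8*d) * (2*d/s)"
    proof (rule mult_mono)
      show "x/(m*r) \<le> 8*d" by (rule xmr)
      have "(r-m)/r \<le> 1/r" using rm rpos by (simp add: divide_right_mono)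
      also have "\<dots> \<le> 1/(s/(2*d))" using rlo spos d rpos by (intro divide_left_mono) auto
      also have "\<dots> = 2*d/s" by simp
      finally show "(r-m)/r \<le> 2*d/s" .
    qed (use d rm rpos in auto)
    have "(8*d) * (2*d/s) = 16*d^2/s" by (simp add: power2_eq_square)
    then show ?thesis using c e f g by linarith
  qed
  have Bb1: "(d - x/(m*r))^2 \<le> 361*(d^3/s)"
  proof -
    have "(d - x/(m*r))^2 = \<bar>d - x/(m*r)\<bar>^2" by simp
    also have "\<dots> \<le> (19*d^2/s)^2" using Dd by (intro power_mono) auto
    also have "\<dots> = 361*(d^3/s) * (d/s)" using spos by (simp add: field_simps power2_eq_square power3_eq_cube)
    also have "\<dots> \<le> 361*(d^3/s) * 1" using ds d spos by (intro mult_left_mono) auto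
    finally show ?thesis by simp
  qed
  have TB: "\<bar>(m - r) * B\<bar> \<le> 532*(d^3/s)"
  proof -
    have "\<bar>(m - r) * B\<bar> = (r-m)*B" using rm B0 by (simp add: abs_mult)
    also have "\<dots> \<le> 1*B" using rm B0 by (intro mult_right_mono) auto
    also have "\<dots> \<le> 532*(d^3/s)" using Bb1 Bb2 unfolding B_def by simp
    finally show ?thesis .
  qed
  have T3: "x^2*e \<le> 114*(d^3/s)"
  proof -
    have "1/m \<le> 1/(s/(4*d))" using mlo spos d mpos by (intro divide_left_mono) auto
    then have im: "1/m \<le> 4*d/s" by simp
    have im0: "0 \<le> 1/m" using mpos by simp
    have "x^2*e \<le> x^2*(1/(9*m^5))" using e1 by (intro mult_left_mono) auto
    also have "\<dots> = x^2 * (1/m)^5/9" by (simp add: field_simps)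
    also have "\<dots> \<le> x^2 * (4*d/s)^5/9" using im im0 by (intro divide_right_mono mult_left_mono power_mono) auto
    also have "\<dots> = (1024/9)*(d^3/s)" unfolding xs using d spos by (rule pw)
    also have "\<dots> \<le> 114*(d^3/s)" using D0 by linarith
    finally show ?thesis .
  qed
  have T30: "x^2*e \<ge> 0" using e0 by simp
  have id: "d^2*m + 2*d*x/m - x^2*(1/(3*m^3) - e) - (2*d* s + k*d - k^3/(3*x))
      = d*(s-k)^2/k + (m - r) * B + x^2*e"
  proof -
    have a1: "(d^2*m + 2*d*x/m - x^2/(3*m^3)) - (d^2*r + 2*d*x/r - x^2/(3*r^3)) = (m - r) * B"
      unfolding B_def by (rule alg1) (use mpos rpos in auto)
    have a2: "(d^2*r + 2*d*x/r - x^2/(3*r^3)) - (2*d* s + k*d - k^3/(3*x)) = d*(s-k)^2/k"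
      unfolding r_def by (rule alg2) (use kpos xpos ss in auto)
    show ?thesis using a1 a2 by (simp add: algebra_simps)
  qed
  have c: "1000 * d^3/s = 1000*(d^3/s)" by simp
  have tb: "(m-r)*B \<le> 532*(d^3/s)" "-((m-r)*B) \<le> 532*(d^3/s)" using TB by (simp_all add: abs_le_iff)
  show ?thesis unfolding id c abs_le_iff using T1 T10 tb T3 T30 D0 by linarith
qed
lemma powr_conv:
  fixes d x :: real assumes "d > 0" "x > 0"
  shows "d powr (5/2) * x powr (-1/2) = d^3 / sqrt (d*x)"
proof -
  have "d powr (5/2) = d powr (2 + 1/2)" by simp
  also have "\<dots> = d powr 2 * d powr (1/2)" by (rule powr_add)
  also have "\<dots> = d^2 * sqrt d" using assms by (simp add: powr_half_sqrt)
  finally have 1: "d powr (5/2) = d^2 * sqrt d" .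
  have 2: "x powr (-1/2) = 1 / sqrt x" using assms by (simp add: powr_minus_divide powr_half_sqrt)
  have 3: "d^3 = d^2 * (sqrt d * sqrt d)" using assms by (simp add: power3_eq_cube power2_eq_square)
  show ?thesis unfolding 1 2 3 using assms by (simp add: real_sqrt_mult field_simps)
qed

lemma Kbounds:
  fixes d x :: real and K :: int
  assumes d: "d > 0" and x: "2*d \<le> x" and K: "K = \<lfloor>(d + sqrt (d\<^sup>2 + 4 * d * x)) / 2\<rfloor>"
  shows "K \<le> sqrt(d*x) + d" "K > sqrt(d*x) + d/2 - 1" "K \<le> x"
proof -
  define q where "q = sqrt (d\<^sup>2 + 4 * d * x)"
  define s where "s = sqrt (d*x)"
  have xpos: "x > 0" using d x by linarith
  have s0: "s \<ge> 0" unfolding s_def using d xpos by simp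
  have ss: "s^2 = d*x" unfolding s_def using d xpos by simp
  have "0 \<le> 4*d*x" using d xpos by simp
  then have qa: "0 \<le> d\<^sup>2 + 4 * d * x" by (intro add_nonneg_nonneg) auto
  then have q2: "q^2 = d\<^sup>2 + 4 * d * x" unfolding q_def by simp
  have q0: "q \<ge> 0" unfolding q_def using qa by simp
  have qlo: "q \<ge> 2* s"
  proof -
    have "(2* s)^2 \<le> q^2" using q2 ss by (simp add: power_mult_distrib power2_eq_square)
    then show ?thesis using q0 by (rule power2_le_imp_le)
  qed
  have qhi: "q \<le> d + 2* s"
  proof -
    have e: "(d+2* s)^2 = d^2 + 4*(d* s) + 4* s^2" by (simp add: power2_eq_square algebra_simps)
    have "0 \<le> d* s" using d s0 by simp
    then have "q^2 \<le> (d+2* s)^2" unfolding e q2 ss by simp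
    moreover have "0 \<le> d + 2* s" using s0 d by linarith
    ultimately show ?thesis by (rule power2_le_imp_le)
  qed
  have qhi2: "q \<le> 2*x - d"
  proof -
    have e: "(2*x - d)^2 = d^2 + 4*(x*x) - 4*(d*x)" by (simp add: power2_eq_square algebra_simps)
    have "(2*d)*x \<le> x*x" using x xpos by (intro mult_right_mono) auto
    then have "q^2 \<le> (2*x - d)^2" unfolding e q2 by simp
    moreover have "0 \<le> 2*x - d" using d x by linarith
    ultimately show ?thesis by (rule power2_le_imp_le)
  qed
  have Kle: "real_of_int K \<le> (d + q)/2" unfolding K q_def by (rule of_int_floor_le)
  have Kgt: "real_of_int K > (d + q)/2 - 1" unfolding K q_def by linarith
  have "real_of_int K \<le> s + d" using Kle qhi by (simp add: field_simps)
  then show "K \<le> sqrt(d*x) + d" unfolding s_def .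
  have "real_of_int K > s + d/2 - 1" using Kgt qlo by (simp add: field_simps)
  then show "K > sqrt(d*x) + d/2 - 1" unfolding s_def .
  show "K \<le> x" using Kle qhi2 by (simp add: field_simps)
qed

theorem proposition6:
  shows "\<exists>C::real. \<forall>(d::int) (x::real) (k::int).
     0 < d \<and> real_of_int d \<le> x / 2 \<and> Kd d x - d < k \<and> k \<le> Kd d x \<longrightarrow>
     \<bar>(real_of_int d)\<^sup>2 * real_of_int \<lfloor>x / real_of_int k\<rfloor>
        + 2 * real_of_int d * x / real_of_int \<lfloor>x / real_of_int k\<rfloor>
        - x\<^sup>2 * F (x / real_of_int k)
      - (2 * real_of_int d * sqrt (real_of_int d * x) + real_of_int k * real_of_int d
         - (real_of_int k) ^ 3 / (3 * x))\<bar>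
     \<le> C * (real_of_int d) powr (5/2) * x powr (-1/2)"
proof (intro exI[of _ 1000] allI impI)
  fix d :: int and x :: real and k :: int
  assume H: "0 < d \<and> real_of_int d \<le> x / 2 \<and> Kd d x - d < k \<and> k \<le> Kd d x"
  define D where "D = real_of_int d"
  define s where "s = sqrt (D*x)"
  have Dpos: "D > 0" using H unfolding D_def by simp
  have x2: "2*D \<le> x" using H unfolding D_def by simp
  have xpos: "x > 0" using Dpos x2 by linarith
  have KB: "Kd d x \<le> s + D" "Kd d x > s + D/2 - 1" "Kd d x \<le> x"
    using Kbounds[OF Dpos x2, of "Kd d x"] unfolding Kd_def D_def s_def by auto
  have ds: "D \<le> s"
  proof -
    have "D^2 \<le> D*x" using Dpos x2 by (simp add: power2_eq_square)
    then have "sqrt (D^2) \<le> s" unfolding s_def by (rule real_sqrt_le_mono)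
    then show ?thesis using Dpos by simp
  qed
  have kint: "Kd d x - d + 1 \<le> k" using H by simp
  then have "real_of_int (Kd d x - d + 1) \<le> real_of_int k" by (rule of_int_le_iff[THEN iffD2])
  then have kK: "real_of_int (Kd d x) - D + 1 \<le> real_of_int k" unfolding D_def by simp
  have kle: "real_of_int k \<le> real_of_int (Kd d x)" using H by simp
  have k1: "s - D/2 < real_of_int k" using kK KB(2) by (simp add: field_simps)
  have k2: "real_of_int k \<le> s + D" using kle KB(1) by (simp add: field_simps)
  have k3: "real_of_int k \<le> x" using kle KB(3) by (simp add: field_simps)
  have kpos: "real_of_int k > 0" using k1 ds Dpos by (simp add: field_simps)
  define t where "t = x / real_of_int k"
  have t1: "t \<ge> 1" unfolding t_def using k3 kpos by simp
  define M where "M = \<lfloor>t\<rfloor>"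
  have M1: "M \<ge> 1" unfolding M_def using t1 by linarith
  have Mt: "real_of_int M \<le> t" "t - 1 < real_of_int M" unfolding M_def by linarith+
  have setq: "{n::nat. 0 < n \<and> real n > t - 1} = {nat M..}"
  proof (intro set_eqI iffI)
    fix n assume "n \<in> {n::nat. 0 < n \<and> real n > t - 1}"
    then have "real n > t - 1" by simp
    then have "int n \<ge> M" unfolding M_def by linarith
    then show "n \<in> {nat M..}" by simp
  next
    fix n assume "n \<in> {nat M..}"
    then have "int n \<ge> M" using M1 by simp
    then have "real n \<ge> real_of_int M" by (metis of_int_le_iff of_int_of_nat_eq)
    then show "n \<in> {n::nat. 0 < n \<and> real n > t - 1}" using Mt M1 by auto
  qed
  have rM: "real (nat M) = real_of_int M" using M1 by simp
  have FT: "0 \<le> 1/(3*real_of_int M^3) - F t \<and> 1/(3*real_of_int M^3) - F t \<le> 1/(9*real_of_int M^5)"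
    using F_tail[of "nat M"] M1 unfolding F_def setq rM by simp
  define e where "e = 1/(3*real_of_int M^3) - F t"
  have Fe: "F t = 1/(3*real_of_int M^3) - e" unfolding e_def by simp
  have MLb: "\<bar>D^2*real_of_int M + 2*D*x/real_of_int M - x^2*(1/(3*real_of_int M^3) - e)
      - (2*D* s + real_of_int k*D - real_of_int k^3/(3*x))\<bar> \<le> 1000 * D^3/s"
    by (rule mainlem[OF Dpos x2 s_def k1 k2]) (use M1 Mt FT in \<open>auto simp: t_def e_def\<close>)
  have PC: "1000 * D powr (5/2) * x powr (-1/2) = 1000 * D^3/s"
    using powr_conv[OF Dpos xpos] unfolding s_def by simp
  show "\<bar>(real_of_int d)\<^sup>2 * real_of_int \<lfloor>x / real_of_int k\<rfloor>
        + 2 * real_of_int d * x / real_of_int \<lfloor>x / real_of_int k\<rfloor>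
        - x\<^sup>2 * F (x / real_of_int k)
      - (2 * real_of_int d * sqrt (real_of_int d * x) + real_of_int k * real_of_int d
         - (real_of_int k) ^ 3 / (3 * x))\<bar>
     \<le> 1000 * (real_of_int d) powr (5/2) * x powr (-1/2)"
    using MLb PC unfolding Fe[unfolded t_def] M_def[unfolded t_def] D_def[symmetric] s_def[symmetric]
    by (simp add: mult.commute)
qed

end
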